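(* Let $k\ge2$ and $n\le0$, and write $q=q_{n,k}$, $r=r_{n,k}$. (a) If $r=0$ and $q\ge2$ (equivalently $|n|\ge2k-1$), then the coefficient of $x^{|n|+1-2k}$ in $\mathcal{F}_{n,k}(x)$ is $2q-3$ when $k=2$ and $q-1$ when $k\ge3$. (b) If $1\le r\le k-1$ and $q\ge r+1$ (equivalently $|n|\ge k(r+1)-1$), then the coefficient of $x^{|n|+1-k(r+1)}$ in $\mathcal{F}_{n,k}(x)$ is $(-1)^r(r+1)\binom{q-1}{r}$. In both cases the exponent in question is the degree of $\mathcal{F}_{n,k}$ minus $k$. No monomial of $\mathcal{F}_{n,k}$ has exponent strictly between this exponent and the degree.
   Context: For $k\ge2$, the polynomials $\mathcal{F}_{n,k}(x)\in\mathbb{Z}[x]$ ($n\in\mathbb{Z}$) are defined by $\mathcal{F}_{1,k}=1$, $\mathcal{F}_{n,k}=0$ for $n=0,-1,\dots,-(k-2)$, and $\mathcal{F}_{n,k}(x)=\sum_{j=1}^{k}x^{k-j}\mathcal{F}_{n-j,k}(x)$ for all $n\in\mathbb{Z}$. This recurrence is used upwards for $n\ge2$, and downwards for $n\le-(k-1)$ as $\mathcal{F}_{n,k}=\mathcal{F}_{n+k,k}-\sum_{j=1}^{k-1}x^j\mathcal{F}_{n+j,k}$. For $n\le0$, set $q_{n,k}=\lfloor(|n|+1)/k\rfloor$ and let $r_{n,k}\in\{0,\dots,k-1\}$ be the residue of $|n|+1$ modulo $k$. Then $|n|+1=kq_{n,k}+r_{n,k}$. *)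

theory Defs
  imports "HOL-Computational_Algebra.Polynomial"
begin

text \<open>The polynomials F_{n,k}(x) for n an integer, k >= 2 (junk value 0 for k < 2).\<close>

function Fpoly :: "nat \<Rightarrow> int \<Rightarrow> int poly" where
  "Fpoly k n =
    (if k < 2 then 0
     else if n = 1 then 1
     else if 1 - int k < n \<and> n \<le> 0 then 0
     else if n \<ge> 2 then (\<Sum>j\<in>{1..k}. monom 1 (k - j) * Fpoly k (n - int j))
     else Fpoly k (n + int k) - (\<Sum>j\<in>{1..k-1}. monom 1 j * Fpoly k (n + int j)))"
  by auto
termination
  by (relation "measure (\<lambda>(k, n). if k < 2 then 0 else if n \<ge> 2 then nat (n + int k)
                   else if 1 - int k < n then 0 else nat (- n))") auto

end

theory Submission
  imports Defs
begin

declare Fpoly.simps[simp del]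

lemma Fpoly_down:
  assumes "k \<ge> 2" "n \<le> 1 - int k"
  shows "Fpoly k n = Fpoly k (n + int k) - (\<Sum>j\<in>{1..k-1}. monom 1 j * Fpoly k (n + int j))"
  using assms by (subst Fpoly.simps) auto

lemma Fpoly_one: "k \<ge> 2 \<Longrightarrow> Fpoly k 1 = 1"
  by (subst Fpoly.simps) auto

lemma Fpoly_zero: "k \<ge> 2 \<Longrightarrow> 1 - int k < n \<Longrightarrow> n \<le> 0 \<Longrightarrow> Fpoly k n = 0"
  by (subst Fpoly.simps) auto

lemma Fpoly_k: assumes "k \<ge> 2" shows "Fpoly k (1 - int k) = 1"
proof -
  have "(\<Sum>j\<in>{1..k-1}. monom 1 j * Fpoly k (1 - int k + int j)) = 0"
    by (rule sum.neutral) (use assms in \<open>auto intro!: Fpoly_zero\<close>)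
  then show ?thesis using Fpoly_down[OF assms, of "1 - int k"] Fpoly_one[OF assms] by simp
qed

lemma sum_shift_lemma:
  fixes g :: "nat \<Rightarrow> int poly"
  assumes "k \<ge> 2"
  shows "(\<Sum>j\<in>{1..k-1}. monom 1 j * g j) + monom 1 k * g k
       = monom 1 1 * g 1 + monom 1 1 * (\<Sum>j\<in>{1..k-1}. monom 1 j * g (j+1))"
proof -
  obtain k0 where k0: "k = Suc (Suc k0)" using assms by (metis add_2_eq_Suc le_Suc_ex)
  have A: "(\<Sum>j\<in>{1..k-1}. monom 1 j * g j) + monom 1 k * g k = (\<Sum>j\<in>{1..k}. monom 1 j * g j)"
    using k0 by (simp add: sum.atLeast_Suc_atMost_Suc_shift)
  have "monom 1 1 * (\<Sum>j\<in>{1..k-1}. monom 1 j * g (j+1)) = (\<Sum>j\<in>{1..k-1}. monom 1 (Suc j) * g (Suc j))"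
    by (simp add: sum_distrib_left mult_monom mult.assoc[symmetric])
  also have "\<dots> = (\<Sum>j\<in>{2..k}. monom 1 j * g j)"
    using sum.shift_bounds_cl_Suc_ivl[of "\<lambda>j. monom 1 j * g j" 1 "k-1", symmetric] k0
    by (simp add: numeral_2_eq_2)
  finally have B: "monom 1 1 * (\<Sum>j\<in>{1..k-1}. monom 1 j * g (j+1)) = (\<Sum>j\<in>{2..k}. monom 1 j * g j)" .
  have C: "(\<Sum>j\<in>{1..k}. monom 1 j * g j) = monom 1 1 * g 1 + (\<Sum>j\<in>{2..k}. monom 1 j * g j)"
    using k0 by (simp add: sum.atLeast_Suc_atMost numeral_2_eq_2)
  show ?thesis using A B C by simp
qed

lemma Fpoly_rec3:
  assumes k: "k \<ge> 2" and m: "m \<ge> k + 1"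
  shows "Fpoly k (1 - int m) = (monom 1 k + 1) * Fpoly k (1 - int (m-k)) - monom 1 1 * Fpoly k (1 - int (m-k-1))"
proof -
  define n where "n = 1 - int m"
  define g where "g j = Fpoly k (n + int j)" for j
  define S where "S = (\<Sum>j\<in>{1..k-1}. monom 1 j * g j)"
  define T where "T = (\<Sum>j\<in>{1..k-1}. monom 1 j * g (j+1))"
  have E1: "Fpoly k n = g k - S" unfolding S_def g_def using Fpoly_down[OF k, of n] m n_def by simp
  have "n + 1 \<le> 1 - int k" using m n_def by simp
  from Fpoly_down[OF k this]
  have E2: "g 1 = g (k+1) - T" unfolding T_def g_def by (simp add: ac_simps)
  have Sh: "S + monom 1 k * g k = monom 1 1 * g 1 + monom 1 1 * T"
    unfolding S_def T_def by (rule sum_shift_lemma[OF k])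
  have S1: "S = monom 1 1 * g 1 + monom 1 1 * T - monom 1 k * g k"
    using Sh by (simp add: eq_diff_eq)
  have T1: "T = g (k+1) - g 1" using E2 by simp
  have "S = monom 1 1 * g (k+1) - monom 1 k * g k"
    unfolding S1 T1 by (simp add: algebra_simps)
  then have "Fpoly k n = (monom 1 k + 1) * g k - monom 1 1 * g (k+1)"
    using E1 by (simp add: algebra_simps)
  moreover have "g k = Fpoly k (1 - int (m-k))" "g (k+1) = Fpoly k (1 - int (m-k-1))"
    using m unfolding g_def n_def by (simp_all add: of_nat_diff algebra_simps)
  ultimately show ?thesis unfolding n_def by simp
qed

definition h :: "nat \<Rightarrow> nat \<Rightarrow> nat \<Rightarrow> int" where
  "h k m e = coeff (Fpoly k (1 - int m)) e"

lemma h0: "k \<ge> 2 \<Longrightarrow> h k 0 e = (if e = 0 then 1 else 0)"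
  unfolding h_def using Fpoly_one[of k] by (simp add: coeff_1)

lemma hsmall: "k \<ge> 2 \<Longrightarrow> 1 \<le> m \<Longrightarrow> m < k \<Longrightarrow> h k m e = 0"
  unfolding h_def by (subst Fpoly_zero) auto

lemma hk: "k \<ge> 2 \<Longrightarrow> h k k e = (if e = 0 then 1 else 0)"
  unfolding h_def using Fpoly_k[of k] by (simp add: coeff_1)

lemma hrec:
  assumes "k \<ge> 2" "m \<ge> k + 1"
  shows "h k m e = (if k \<le> e then h k (m-k) (e-k) else 0) + h k (m-k) e
                   - (if 1 \<le> e then h k (m-k-1) (e-1) else 0)"
  unfolding h_def using Fpoly_rec3[OF assms]
  by (simp add: distrib_right coeff_monom_mult)

lemma hsupp:
  assumes k: "k \<ge> 2"
  shows "h k m e \<noteq> 0 \<Longrightarrow> (e = 0 \<and> m = 0) \<or> (e + k \<le> m \<and> k dvd (m - e))"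
proof (induction m arbitrary: e rule: less_induct)
  case (less m)
  show ?case
  proof (cases "m = 0")
    case True then show ?thesis using less.prems h0[OF k] by (auto split: if_splits)
  next
    case m0: False
    show ?thesis
    proof (cases "m < k")
      case True then show ?thesis using less.prems hsmall[OF k] m0 by auto
    next
      case False
      show ?thesis
      proof (cases "m = k")
        case True then show ?thesis using less.prems hk[OF k] by (auto split: if_splits)
      next
        case False
        then have mk: "m \<ge> k + 1" using \<open>\<not> m < k\<close> by simp
        have lt1: "m - k < m" "m - k - 1 < m" using mk k by auto
        from less.prems hrec[OF k mk, of e]
        consider "k \<le> e" "h k (m-k) (e-k) \<noteq> 0" | "h k (m-k) e \<noteq> 0" | "1 \<le> e" "h k (m-k-1) (e-1) \<noteq> 0"
          using k by (cases "k \<le> e"; cases "1 \<le> e"; fastforce)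
        then show ?thesis
        proof cases
          case 1
          from less.IH[OF lt1(1) 1(2)] mk have X: "e - k + k \<le> m - k \<and> k dvd (m - k - (e - k))" by auto
          have "m - k - (e - k) = m - e" using 1 mk by simp
          then show ?thesis using X 1 by auto
        next
          case 2
          from less.IH[OF lt1(1) 2] mk have X: "e + k \<le> m - k \<and> k dvd (m - k - e)" by auto
          then have "m - e = (m - k - e) + k" by linarith
          then show ?thesis using X by (metis dvd_add dvd_refl le_diff_conv le_add1 le_trans)
        next
          case 3
          from less.IH[OF lt1(2) 3(2)] have X: "(e - 1 = 0 \<and> m - k - 1 = 0) \<or> (e - 1 + k \<le> m - k - 1 \<and> k dvd (m - k - 1 - (e - 1)))" by auto
          show ?thesis
          proof (cases "e - 1 = 0 \<and> m - k - 1 = 0")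
            case True
            then have "e = 1" "m = k + 1" using 3 mk by auto
            then show ?thesis by simp
          next
            case False
            with X have Y: "e - 1 + k \<le> m - k - 1" "k dvd (m - k - 1 - (e - 1))" by auto
            have "m - k - 1 - (e - 1) = m - k - e" using 3 by simp
            moreover have "m - e = (m - k - e) + k" using Y 3 by linarith
            ultimately have "k dvd (m - e)" using Y(2) by (metis dvd_add dvd_refl)
            moreover have "e + k \<le> m" using Y 3 k by linarith
            ultimately show ?thesis by simp
          qed
        qed
      qed
    qed
  qed
qed

definition cc :: "nat \<Rightarrow> nat \<Rightarrow> nat \<Rightarrow> int" where
  "cc k q j = h k (j + k * q) j"

lemma cc0: assumes k: "k \<ge> 2" shows "cc k 0 j = (if j = 0 then 1 else 0)"
proof (cases "j = 0")
  case True then show ?thesis unfolding cc_def using h0[OF k] by simp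
next
  case False
  then have "h k j j = 0" using hsupp[OF k, of j j] k by auto
  then show ?thesis using False unfolding cc_def by simp
qed

lemma cc10: "k \<ge> 2 \<Longrightarrow> cc k 1 0 = 1"
  unfolding cc_def using hk[of k] by simp

lemma ccrec:
  assumes k: "k \<ge> 2" and q: "q \<ge> 1" and qj: "q \<ge> 2 \<or> j \<ge> 1"
  shows "cc k q j = (if k \<le> j then cc k q (j-k) else 0) + cc k (q-1) j
                   - (if 1 \<le> j then cc k (q-1) (j-1) else 0)"
proof -
  define m where "m = j + k * q"
  have A: "k * 1 \<le> k * q" using q by (rule mult_le_mono2)
  have B: "q \<ge> 2 \<Longrightarrow> k * 2 \<le> k * q" by (rule mult_le_mono2)
  have mk: "m \<ge> k + 1" unfolding m_def proof (cases "q \<ge> 2")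
    case True then show "j + k * q \<ge> k + 1" using B k by linarith
  next
    case False then show "j + k * q \<ge> k + 1" using A qj by linarith
  qed
  have e1: "m - k = j + k * (q - 1)" unfolding m_def using q by (simp add: algebra_simps right_diff_distrib')
  have e2: "k \<le> j \<Longrightarrow> m - k = (j - k) + k * q" using e1 q unfolding m_def
    by (simp add: algebra_simps)
  have e3: "1 \<le> j \<Longrightarrow> m - k - 1 = (j - 1) + k * (q - 1)" using e1 by simp
  show ?thesis unfolding cc_def using hrec[OF k mk, of j] e1 e2 e3 unfolding m_def[symmetric]
    by (auto)
qed

lemma G1:
  assumes k: "k \<ge> 2" and b: "b < k"
  shows "cc k 1 (k * a + b) = (-1) ^ b * int (1 choose b)"
proof (induction a)
  case 0
  show ?case
  proof (cases "b = 0")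
    case True then show ?thesis using cc10[OF k] by simp
  next
    case False
    then have "cc k 1 b = cc k 0 b - cc k 0 (b - 1)" using ccrec[OF k, of 1 b] b by simp
    then show ?thesis using False cc0[OF k] by (cases "b = 1") auto
  qed
next
  case (Suc a)
  have j1: "k * Suc a + b \<ge> k" by simp
  then have "cc k 1 (k * Suc a + b) = cc k 1 (k * Suc a + b - k) + cc k 0 (k * Suc a + b)
      - cc k 0 (k * Suc a + b - 1)" using ccrec[OF k, of 1 "k * Suc a + b"] k by simp
  also have "\<dots> = cc k 1 (k * a + b)" using cc0[OF k] k by simp
  finally show ?case using Suc by simp
qed

lemma G:
  assumes k: "k \<ge> 2"
  shows "1 \<le> q \<Longrightarrow> q \<le> k \<Longrightarrow> b < k \<Longrightarrow> (q < k \<or> 1 \<le> b) \<Longrightarrow>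
    cc k q (k * a + b) = (-1) ^ b * int (q choose b) * int ((a + q - 1) choose (q - 1))"
proof (induction q arbitrary: a b rule: nat_induct_at_least)
  case base
  then show ?case using G1[OF k] by simp
next
  case (Suc q)
  have qk: "q < k" using Suc by simp
  have IH: "\<And>b a. b < k \<Longrightarrow> cc k q (k * a + b) = (-1) ^ b * int (q choose b) * int ((a + q - 1) choose (q - 1))"
    using Suc.IH Suc.hyps qk by (meson less_imp_le)
  have bk: "b < k" and cond: "Suc q < k \<or> 1 \<le> b" and q1: "1 \<le> q" using Suc by auto
  show ?case
  proof (induction a)
    case 0
    show ?case
    proof (cases "b = 0")
      case True
      then have "cc k (Suc q) 0 = cc k q 0" using ccrec[OF k, of "Suc q" 0] q1 k by simp
      then show ?thesis using True IH[of 0 0] k by simp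
    next
      case False
      then have "cc k (Suc q) b = cc k q b - cc k q (b - 1)" using ccrec[OF k, of "Suc q" b] q1 bk by simp
      moreover have "cc k q b = (-1) ^ b * int (q choose b)" using IH[of b 0] bk by simp
      moreover have "cc k q (b - 1) = (-1) ^ (b - 1) * int (q choose (b - 1))" using IH[of "b - 1" 0] bk by simp
      moreover have "(-1::int) ^ b = - ((-1) ^ (b - 1))" using False by (cases b) auto
      moreover have "Suc q choose b = (q choose b) + (q choose (b - 1))" using False by (cases b) auto
      ultimately show ?thesis by (simp add: algebra_simps)
    qed
  next
    case (Suc a)
    define j where "j = k * Suc a + b"
    have jk: "k \<le> j" "1 \<le> j" "j - k = k * a + b" using k unfolding j_def by auto
    have rec: "cc k (Suc q) j = cc k (Suc q) (k * a + b) + cc k q j - cc k q (j - 1)"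
      using ccrec[OF k, of "Suc q" j] jk q1 by simp
    have I: "cc k (Suc q) (k * a + b) = (-1) ^ b * int (Suc q choose b) * int ((a + q) choose q)"
      using Suc.IH by simp
    have cj: "cc k q j = (-1) ^ b * int (q choose b) * int ((a + q) choose (q - 1))"
      unfolding j_def using IH[of b "Suc a"] bk q1 by simp
    have Pn: "int ((a + q) choose (q - 1)) + int ((a + q) choose q) = int ((Suc a + Suc q - 1) choose (Suc q - 1))"
      using q1 by (cases q) (auto simp: add_ac)
    define s where "s = ((-1::int) ^ b)"
    define P where "P = int ((a + q) choose (q - 1))"
    define R where "R = int ((a + q) choose q)"
    show ?case
    proof (cases "b = 0")
      case True
      then have "j - 1 = k * a + (k - 1)" unfolding j_def using k by simp
      then have "cc k q (j - 1) = (-1) ^ (k - 1) * int (q choose (k - 1)) * int ((a + q - 1) choose (q - 1))"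
        using IH[of "k - 1" a] k by simp
      also have "q choose (k - 1) = 0" using cond True by simp
      finally have c1: "cc k q (j - 1) = 0" by simp
      have "cc k (Suc q) j = R + P" using rec c1 cj I True unfolding P_def R_def by simp
      then show ?thesis using Pn True unfolding P_def R_def j_def by simp
    next
      case False
      then have "j - 1 = k * Suc a + (b - 1)" unfolding j_def by simp
      then have c1: "cc k q (j - 1) = (-1) ^ (b - 1) * int (q choose (b - 1)) * int ((a + q) choose (q - 1))"
        using IH[of "b - 1" "Suc a"] bk by simp
      have sg: "(-1::int) ^ (b - 1) = - s" unfolding s_def using False by (cases b) auto
      have bc: "int (Suc q choose b) = int (q choose b) + int (q choose (b - 1))" using False by (cases b) auto
      have "cc k (Suc q) j = s * (int (q choose b) + int (q choose (b - 1))) * R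
           + s * int (q choose b) * P + s * int (q choose (b - 1)) * P"
        using rec c1 cj I sg bc unfolding s_def[symmetric] P_def[symmetric] R_def[symmetric] by simp
      also have "\<dots> = s * (int (q choose b) + int (q choose (b - 1))) * (P + R)" by (simp add: algebra_simps)
      finally show ?thesis using Pn bc unfolding P_def R_def j_def s_def by simp
    qed
  qed
qed

lemma K2: "cc 2 2 (2 * a) = 2 * int a + 1"
proof (induction a)
  case 0
  then show ?case using ccrec[of 2 2 0] cc10[of 2] by simp
next
  case (Suc a)
  have r: "cc 2 2 (2 * Suc a) = cc 2 2 (2 * a) + cc 2 1 (2 * Suc a) - cc 2 1 (2 * Suc a - 1)"
    using ccrec[of 2 2 "2 * Suc a"] by simp
  have a1: "cc 2 1 (2 * Suc a) = 1" using G1[of 2 0 "Suc a"] by simp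
  have a2: "cc 2 1 (2 * Suc a - 1) = -1" using G1[of 2 1 a] by simp
  show ?case using r a1 a2 Suc by simp
qed

lemma h_cc: "m = e + k * t \<Longrightarrow> h k m e = cc k t e"
  unfolding cc_def by simp

lemma gap_zero:
  assumes k: "k \<ge> 2" and m1: "m - e0 = k * (t + 1)" and e0m: "e0 \<le> m"
    and i: "e0 < i" "i < e0 + k"
  shows "h k m i = 0"
proof (rule ccontr)
  assume "h k m i \<noteq> 0"
  from hsupp[OF k this] i m1 have "k dvd (m - i)" "i \<le> m" by auto
  then obtain s where s: "m - i = k * s" by blast
  have kt: "k * (t + 1) = k * t + k" by simp
  have "i \<le> m" using \<open>i \<le> m\<close> .
  have "k * t < k * s" using s m1 i e0m kt \<open>i \<le> m\<close> by linarith
  then have "t < s" by simp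
  moreover have "k * s < k * (t + 1)" using s m1 i e0m \<open>i \<le> m\<close> by linarith
  then have "s < t + 1" using mult_less_cancel1 by blast
  ultimately show False by simp
qed

lemma above_zero:
  assumes k: "k \<ge> 2" and m: "m = k * Q + r" and r: "r < k" and t: "1 \<le> t" "t \<le> Q"
    and tr: "t \<le> r \<or> t = 1" and i: "m - k * t < i"
  shows "h k m i = 0"
proof (rule ccontr)
  assume h: "h k m i \<noteq> 0"
  have "k * 1 \<le> k * Q" using t by (intro mult_le_mono2) simp
  then have m1: "m \<ge> 1" using m k by linarith
  from hsupp[OF k h] m1 have A: "i + k \<le> m" "k dvd (m - i)" by auto
  then obtain s where s: "m - i = k * s" by blast
  have "k * s < k * t" using s i A by linarith
  then have st: "s < t" by simp
  have "k * 1 \<le> k * s" using s A by linarith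
  then have s1: "1 \<le> s" using k by simp
  then have tr2: "s < r" using st tr by auto
  have sQ: "s \<le> Q" using st t by simp
  have ie: "i = k * (Q - s) + r" using s m sQ A by (simp add: algebra_simps diff_mult_distrib2)
  have "m = i + k * s" using s A by linarith
  then have "h k m i = cc k s i" by (rule h_cc)
  also have "\<dots> = 0" unfolding ie using G[OF k s1, of r "Q - s"] tr2 r by simp
  finally show False using h by simp
qed

theorem mainTheorem11:
  fixes k q r :: nat and n :: int
  assumes "k \<ge> 2" and "n \<le> 0"
    and "q = (nat (- n) + 1) div k" and "r = (nat (- n) + 1) mod k"
  shows "(r = 0 \<and> q \<ge> 2 \<longrightarrow>
            coeff (Fpoly k n) (nat (- n) + 1 - 2 * k) =
              (if k = 2 then 2 * int q - 3 else int q - 1)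
          \<and> degree (Fpoly k n) = (nat (- n) + 1 - 2 * k) + k
          \<and> (\<forall>i. nat (- n) + 1 - 2 * k < i \<and> i < degree (Fpoly k n)
                 \<longrightarrow> coeff (Fpoly k n) i = 0))
       \<and> (1 \<le> r \<and> r \<le> k - 1 \<and> q \<ge> r + 1 \<longrightarrow>
            coeff (Fpoly k n) (nat (- n) + 1 - k * (r + 1)) =
              (-1) ^ r * int (r + 1) * int ((q - 1) choose r)
          \<and> degree (Fpoly k n) = (nat (- n) + 1 - k * (r + 1)) + k
          \<and> (\<forall>i. nat (- n) + 1 - k * (r + 1) < i \<and> i < degree (Fpoly k n)
                 \<longrightarrow> coeff (Fpoly k n) i = 0))"
proof -
  define m where "m = nat (- n) + 1"
  have nm: "n = 1 - int m" using assms(2) unfolding m_def by simp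
  have C: "\<And>i. coeff (Fpoly k n) i = h k m i" unfolding h_def nm ..
  have mQ: "m = k * q + r" using assms(3,4) div_mult_mod_eq[of m k] unfolding m_def
    by (simp add: mult.commute)
  have rk: "r < k" using assms(1,4) by simp
  have k: "k \<ge> 2" by fact
  have degI: "degree (Fpoly k n) = D" if "h k m D \<noteq> 0" "\<forall>i>D. h k m i = 0" for D
  proof (rule antisym)
    show "degree (Fpoly k n) \<le> D" by (rule degree_le) (use that C in auto)
    show "D \<le> degree (Fpoly k n)" by (rule le_degree) (use that C in auto)
  qed
  show ?thesis unfolding m_def[symmetric] C
  proof (intro conjI impI)
    assume A: "r = 0 \<and> 2 \<le> q"
    have e0: "m - 2 * k = k * (q - 2)" using mQ A by (simp add: diff_mult_distrib2)
    have m1: "m - e0 = k * (1 + 1)" if "e0 = m - 2 * k" for e0 using that mQ A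
      by (simp add: diff_mult_distrib2)
    have D: "m - 2 * k + k = k * (q - 1) + 0" using mQ A by (simp add: diff_mult_distrib2)
    have hD: "h k m (m - 2 * k + k) = 1"
    proof -
      have "m = (m - 2 * k + k) + k * 1" using D mQ A by (simp add: diff_mult_distrib2)
      then have "h k m (m - 2 * k + k) = cc k 1 (m - 2 * k + k)" by (rule h_cc)
      then show ?thesis using D G1[OF k, of 0 "q - 1"] k by simp
    qed
    have above: "\<forall>i>m - 2 * k + k. h k m i = 0"
    proof (intro allI impI)
      fix i assume "m - 2 * k + k < i"
      then have "m - k * 1 < i" using D mQ A by (simp add: diff_mult_distrib2)
      then show "h k m i = 0" using above_zero[OF k mQ rk, of 1] A by simp
    qed
    have deg: "degree (Fpoly k n) = m - 2 * k + k" using degI hD above by simp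
    have "m = (m - 2 * k) + k * 2" using e0 mQ A by (simp add: diff_mult_distrib2)
    then have h0: "h k m (m - 2 * k) = cc k 2 (m - 2 * k)" by (rule h_cc)
    show "h k m (m - 2 * k) = (if k = 2 then 2 * int q - 3 else int q - 1)"
    proof (cases "k = 2")
      case True
      then show ?thesis using h0 e0 K2[of "q - 2"] A by (simp add: of_nat_diff)
    next
      case False
      then have "2 < k" using k by simp
      then show ?thesis using h0 e0 G[OF k, of 2 0 "q - 2"] A k by (simp add: of_nat_diff)
    qed
    show "degree (Fpoly k n) = m - 2 * k + k" by (rule deg)
    show "\<forall>i. m - 2 * k < i \<and> i < degree (Fpoly k n) \<longrightarrow> h k m i = 0"
      using gap_zero[OF k, of m "m - 2 * k" 1] deg m1 by auto
  next
    assume B: "1 \<le> r \<and> r \<le> k - 1 \<and> r + 1 \<le> q"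
    have kr: "k * (r + 1) \<le> k * q" using B by (intro mult_le_mono2) simp
    have "k * (q - r - 1) = k * q - k * (r + 1)" by (simp add: diff_mult_distrib2)
    then have e0: "m - k * (r + 1) = k * (q - r - 1) + r" using mQ kr by linarith
    have m1: "m - (m - k * (r + 1)) = k * (r + 1)" using mQ kr by simp
    have "k * (q - r) = k * q - k * r" by (simp add: diff_mult_distrib2)
    moreover have "k * (r + 1) = k * r + k" by simp
    ultimately have D: "m - k * (r + 1) + k = k * (q - r) + r" using mQ kr by linarith
    have hD: "h k m (m - k * (r + 1) + k) \<noteq> 0"
    proof -
      have "m = (m - k * (r + 1) + k) + k * r" using mQ kr by (simp add: algebra_simps)
      then have "h k m (m - k * (r + 1) + k) = cc k r (m - k * (r + 1) + k)" by (rule h_cc)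
      also have "\<dots> = (-1) ^ r * int (r choose r) * int ((q - r + r - 1) choose (r - 1))"
        unfolding D using G[OF k, of r r "q - r"] B rk by simp
      finally show ?thesis using B by (simp add: not_less) linarith
    qed
    have above: "\<forall>i>m - k * (r + 1) + k. h k m i = 0"
    proof (intro allI impI)
      fix i assume "m - k * (r + 1) + k < i"
      then have "m - k * r < i" using mQ kr by (simp add: algebra_simps)
      then show "h k m i = 0" using above_zero[OF k mQ rk, of r] B by simp
    qed
    have deg: "degree (Fpoly k n) = m - k * (r + 1) + k" using degI hD above by simp
    have "m = (m - k * (r + 1)) + k * (r + 1)" using kr mQ by simp
    then have "h k m (m - k * (r + 1)) = cc k (r + 1) (m - k * (r + 1))" by (rule h_cc)
    also have "\<dots> = (-1) ^ r * int ((r + 1) choose r) * int ((q - r - 1 + (r + 1) - 1) choose (r + 1 - 1))"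
      unfolding e0 using G[OF k, of "r + 1" r "q - r - 1"] B rk by simp
    also have "\<dots> = (-1) ^ r * int (r + 1) * int ((q - 1) choose r)" using B by simp
    finally show "h k m (m - k * (r + 1)) = (-1) ^ r * int (r + 1) * int ((q - 1) choose r)" .
    show "degree (Fpoly k n) = m - k * (r + 1) + k" by (rule deg)
    show "\<forall>i. m - k * (r + 1) < i \<and> i < degree (Fpoly k n) \<longrightarrow> h k m i = 0"
      using gap_zero[OF k m1, of] deg kr mQ by auto
  qed
qed

end
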